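(* Let $K$ be a number field and let $\alpha>0$ and $\beta>0$ be two algebraically independent real numbers. Suppose $F(x)\in K[[x^{\mathbb{R}}]]$ is a Hahn series that is both $\alpha$-Mahler and $\beta$-Mahler. Then $F(x)$ is rational, i.e. $F(x)\in K(x)$.
   Context: A Hahn series over $K$ with exponent group $\mathbb{R}$ is a formal expression $F(x)=\sum_{i\in\mathbb{R}} f_i x^i$ with $f_i\in K$ whose support $P(F)=\{i: f_i\neq 0\}$ is well-ordered; these form a field $K[[x^{\mathbb{R}}]]$ containing $K(x)$. For $\gamma>0$, $F(x^\gamma)=\sum_i f_i x^{\gamma i}$. For real $\gamma>0$, $F$ is $\gamma$-Mahler if there exist $d\ge0$ and polynomials $P_0,\dots,P_d,A\in K[x]$, not all $P_i$ zero, with $\sum_{i=0}^d P_i(x)F(x^{\gamma^i})=A(x)$. *)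

theory Defs
  imports Complex_Main "HOL-Computational_Algebra.Polynomial"
begin

definition number_field :: "complex set \<Rightarrow> bool" where
  "number_field K \<longleftrightarrow>
     0 \<in> K \<and> 1 \<in> K \<and>
     (\<forall>x\<in>K. \<forall>y\<in>K. x + y \<in> K \<and> x * y \<in> K \<and> x - y \<in> K) \<and>
     (\<forall>x\<in>K. x \<noteq> 0 \<longrightarrow> inverse x \<in> K) \<and>
     (\<exists>B. finite B \<and> B \<subseteq> K \<and>
        (\<forall>x\<in>K. \<exists>c. (\<forall>b\<in>B. c b \<in> \<rat>) \<and> x = (\<Sum>b\<in>B. c b * b)))"

text \<open>A Hahn series over K with exponent group the reals is represented by its
coefficient function; the support must be well-ordered.\<close>
definition hahn_series :: "complex set \<Rightarrow> (real \<Rightarrow> complex) \<Rightarrow> bool" where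
  "hahn_series K F \<longleftrightarrow>
     (\<forall>i. F i \<in> K) \<and>
     (\<forall>S. S \<subseteq> {i. F i \<noteq> 0} \<longrightarrow> S \<noteq> {} \<longrightarrow> (\<exists>m\<in>S. \<forall>s\<in>S. m \<le> s))"

definition Kpoly :: "complex set \<Rightarrow> complex poly set" where
  "Kpoly K = {p. \<forall>n. coeff p n \<in> K}"

definition poly_hahn :: "complex poly \<Rightarrow> real \<Rightarrow> complex" where
  "poly_hahn p e = (if \<exists>n::nat. e = real n then coeff p (nat \<lfloor>e\<rfloor>) else 0)"

definition pmul_hahn :: "complex poly \<Rightarrow> (real \<Rightarrow> complex) \<Rightarrow> real \<Rightarrow> complex" where
  "pmul_hahn p F e = (\<Sum>j\<le>degree p. coeff p j * F (e - real j))"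

text \<open>Substitution F(x) \<mapsto> F(x^\<gamma>) for \<gamma> > 0.\<close>
definition subst_hahn :: "real \<Rightarrow> (real \<Rightarrow> complex) \<Rightarrow> real \<Rightarrow> complex" where
  "subst_hahn \<gamma> F e = F (e / \<gamma>)"

definition mahler :: "complex set \<Rightarrow> real \<Rightarrow> (real \<Rightarrow> complex) \<Rightarrow> bool" where
  "mahler K \<gamma> F \<longleftrightarrow>
     (\<exists>(d::nat) (P :: nat \<Rightarrow> complex poly) A.
        (\<forall>i\<le>d. P i \<in> Kpoly K) \<and> A \<in> Kpoly K \<and> (\<exists>i\<le>d. P i \<noteq> 0) \<and>
        (\<lambda>e. \<Sum>i\<le>d. pmul_hahn (P i) (subst_hahn (\<gamma> ^ i) F) e) = poly_hahn A)"

text \<open>F lies in K(x): F = A/Q with A, Q \<in> K[x], Q \<noteq> 0, i.e. Q F = A.\<close>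
definition rational_hahn :: "complex set \<Rightarrow> (real \<Rightarrow> complex) \<Rightarrow> bool" where
  "rational_hahn K F \<longleftrightarrow>
     (\<exists>A Q. A \<in> Kpoly K \<and> Q \<in> Kpoly K \<and> Q \<noteq> 0 \<and> pmul_hahn Q F = poly_hahn A)"

definition alg_indep2 :: "real \<Rightarrow> real \<Rightarrow> bool" where
  "alg_indep2 a b \<longleftrightarrow>
     (\<forall>(N::nat) (c :: nat \<Rightarrow> nat \<Rightarrow> int).
        (\<exists>i\<le>N. \<exists>j\<le>N. c i j \<noteq> 0) \<longrightarrow>
        (\<Sum>i\<le>N. \<Sum>j\<le>N. of_int (c i j) * a ^ i * b ^ j) \<noteq> 0)"

end

theory Submission
  imports Defs
begin

definition ratp :: "real poly \<Rightarrow> bool" where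
  "ratp p \<longleftrightarrow> (\<forall>n. coeff p n \<in> \<rat>)"

definition transc :: "real \<Rightarrow> bool" where
  "transc g \<longleftrightarrow> (\<forall>p. ratp p \<longrightarrow> poly p g = 0 \<longrightarrow> p = 0)"

definition Qset :: "real \<Rightarrow> real set" where
  "Qset g = {t. \<exists>p q. ratp p \<and> ratp q \<and> poly q g \<noteq> 0 \<and> t * poly q g = poly p g}"

lemma ratp_add: "ratp p \<Longrightarrow> ratp q \<Longrightarrow> ratp (p + q)"
  by (auto simp: ratp_def)
lemma ratp_diff: "ratp p \<Longrightarrow> ratp q \<Longrightarrow> ratp (p - q)"
  by (auto simp: ratp_def)
lemma ratp_smult: "c \<in> \<rat> \<Longrightarrow> ratp q \<Longrightarrow> ratp (smult c q)"
  by (auto simp: ratp_def)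
lemma ratp_mult: "ratp p \<Longrightarrow> ratp q \<Longrightarrow> ratp (p * q)"
  by (auto simp: ratp_def coeff_mult intro!: Rats_sum)
lemma ratp_const: "c \<in> \<rat> \<Longrightarrow> ratp [:c:]"
  by (auto simp: ratp_def coeff_pCons split: nat.splits)
lemma ratp_monom: "c \<in> \<rat> \<Longrightarrow> ratp (monom c n)"
  by (auto simp: ratp_def)
lemma ratp_one: "ratp 1"
  by (auto simp: ratp_def coeff_1)

lemma common_denom:
  fixes X :: "real set"
  shows "finite X \<Longrightarrow> X \<subseteq> \<rat> \<Longrightarrow> \<exists>D::int. D > 0 \<and> (\<forall>x\<in>X. of_int D * x \<in> \<int>)"
proof (induction X rule: finite_induct)
  case empty
  then show ?case by (intro exI[of _ 1]) auto
next
  case (insert x X)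
  then obtain D :: int where D: "D > 0" "\<forall>y\<in>X. of_int D * y \<in> \<int>" by auto
  from insert have "x \<in> \<rat>" by auto
  then obtain r where r: "x = of_rat r" by (auto elim: Rats_cases)
  obtain a b where ab: "quotient_of r = (a, b)" by (cases "quotient_of r")
  have b: "b > 0" using ab quotient_of_denom_pos by blast
  have rr: "r = of_int a / of_int b" using ab quotient_of_div by blast
  have xx: "x = of_int a / of_int b" using r rr by (simp add: of_rat_divide)
  show ?case
  proof (intro exI[of _ "D * b"] conjI ballI)
    show "D * b > 0" using D b by simp
    fix y assume "y \<in> insert x X"
    then show "of_int (D * b) * y \<in> \<int>"
    proof
      assume yx: "y = x"
      have "of_int (D * b) * y = of_int (D * a)" using b xx yx by simp
      then show ?thesis by (metis Ints_of_int)
    next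
      assume "y \<in> X"
      then have "of_int D * y \<in> \<int>" using D by auto
      then have "of_int b * (of_int D * y) \<in> \<int>" by (metis Ints_mult Ints_of_int)
      then show ?thesis by (simp add: algebra_simps)
    qed
  qed
qed

lemma indep_rat:
  assumes ai: "alg_indep2 a b" and cr: "\<forall>i j. c i j \<in> \<rat>"
    and s0: "(\<Sum>i\<le>N. \<Sum>j\<le>N. c i j * a^i * b^j) = 0" and ij: "i \<le> N" "j \<le> N"
  shows "c i j = 0"
proof -
  have "finite ((\<lambda>(i,j). c i j) ` ({..N}\<times>{..N}))" by auto
  moreover have "(\<lambda>(i,j). c i j) ` ({..N}\<times>{..N}) \<subseteq> \<rat>" using cr by auto
  ultimately obtain D :: int where D: "D > 0" "\<forall>x\<in>(\<lambda>(i,j). c i j) ` ({..N}\<times>{..N}). of_int D * x \<in> \<int>"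
    using common_denom by blast
  define c' where "c' i j = \<lfloor>of_int D * c i j\<rfloor>" for i j
  have ic: "of_int (c' i j) = of_int D * c i j" if "i \<le> N" "j \<le> N" for i j
  proof -
    have "of_int D * c i j \<in> \<int>" using D that by auto
    then show ?thesis unfolding c'_def by (auto elim: Ints_cases)
  qed
  have "(\<Sum>i\<le>N. \<Sum>j\<le>N. of_int (c' i j) * a^i * b^j) = (\<Sum>i\<le>N. \<Sum>j\<le>N. of_int D * (c i j * a^i * b^j))"
    by (intro sum.cong refl) (simp add: ic)
  also have "\<dots> = of_int D * (\<Sum>i\<le>N. \<Sum>j\<le>N. c i j * a^i * b^j)"
    by (simp add: sum_distrib_left)
  also have "\<dots> = 0" using s0 by simp
  finally have "\<not> (\<exists>i\<le>N. \<exists>j\<le>N. c' i j \<noteq> 0)" using ai unfolding alg_indep2_def by blast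
  then have "c' i j = 0" using ij by auto
  then have "of_int D * c i j = 0" using ic[OF ij] by simp
  then show ?thesis using D by simp
qed

lemma poly_sum_N: "degree p \<le> N \<Longrightarrow> poly p (x::real) = (\<Sum>i\<le>N. coeff p i * x^i)"
  unfolding poly_altdef
  by (intro sum.mono_neutral_left) (auto simp: coeff_eq_0)

lemma transc_a: assumes "alg_indep2 a b" shows "transc a"
  unfolding transc_def
proof (intro allI impI)
  fix p assume rp: "ratp p" and p0: "poly p a = 0"
  define N where "N = degree p"
  define c where "c i j = (if j = 0 then coeff p i else 0)" for i j :: nat
  have "(\<Sum>i\<le>N. \<Sum>j\<le>N. c i j * a^i * b^j) = (\<Sum>i\<le>N. coeff p i * a^i)"
  proof (intro sum.cong refl)
    fix i assume "i \<in> {..N}"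
    have "(\<Sum>j\<le>N. c i j * a^i * b^j) = (\<Sum>j\<le>N. if j = 0 then coeff p i * a^i else 0)"
      by (intro sum.cong) (auto simp: c_def)
    then show "(\<Sum>j\<le>N. c i j * a^i * b^j) = coeff p i * a^i" by simp
  qed
  also have "\<dots> = 0" using p0 poly_sum_N[of p N a] by (simp add: N_def)
  finally have s: "(\<Sum>i\<le>N. \<Sum>j\<le>N. c i j * a^i * b^j) = 0" .
  have cr: "\<forall>i j. c i j \<in> \<rat>" using rp by (auto simp: c_def ratp_def)
  show "p = 0"
  proof (rule poly_eqI)
    fix n show "coeff p n = coeff 0 n"
    proof (cases "n \<le> N")
      case True
      then have "c n 0 = 0" using indep_rat[OF assms cr s] by auto
      then show ?thesis by (simp add: c_def)
    qed (simp add: N_def coeff_eq_0)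
  qed
qed

lemma transc_b: assumes "alg_indep2 a b" shows "transc b"
  unfolding transc_def
proof (intro allI impI)
  fix p assume rp: "ratp p" and p0: "poly p b = 0"
  define N where "N = degree p"
  define c where "c i j = (if i = 0 then coeff p j else 0)" for i j :: nat
  have "(\<Sum>i\<le>N. \<Sum>j\<le>N. c i j * a^i * b^j) = (\<Sum>i\<le>N. if i = 0 then (\<Sum>j\<le>N. coeff p j * b^j) else 0)"
    by (intro sum.cong refl) (simp add: c_def)
  also have "\<dots> = 0" using p0 poly_sum_N[of p N b] by (simp add: N_def)
  finally have s: "(\<Sum>i\<le>N. \<Sum>j\<le>N. c i j * a^i * b^j) = 0" .
  have cr: "\<forall>i j. c i j \<in> \<rat>" using rp by (auto simp: c_def ratp_def)
  show "p = 0"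
  proof (rule poly_eqI)
    fix n show "coeff p n = coeff 0 n"
    proof (cases "n \<le> N")
      case True
      then have "c 0 n = 0" using indep_rat[OF assms cr s] by auto
      then show ?thesis by (simp add: c_def)
    qed (simp add: N_def coeff_eq_0)
  qed
qed


lemma Q_nat: "real n \<in> Qset g"
  unfolding Qset_def
  by (rule CollectI, intro exI[of _ "[:real n:]"] exI[of _ 1]) (auto intro: ratp_const ratp_one)

lemma Q_shift: assumes "t \<in> Qset g" shows "real j + g^i * t \<in> Qset g"
proof -
  from assms obtain p q where pq: "ratp p" "ratp q" "poly q g \<noteq> 0" "t * poly q g = poly p g"
    unfolding Qset_def by blast
  have "ratp (smult (real j) q + monom 1 i * p)"
      by (intro ratp_add ratp_smult ratp_mult ratp_monom pq) auto
  moreover have "(real j + g ^ i * t) * poly q g = poly (smult (real j) q + monom 1 i * p) g"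
      using pq(4) by (simp add: poly_monom algebra_simps flip: pq(4))
  ultimately show ?thesis using pq unfolding Qset_def by blast
qed

lemma Q_unshift: assumes "t \<in> Qset g" "g > 0" shows "(t - real j) / g^i \<in> Qset g"
proof -
  from assms obtain p q where pq: "ratp p" "ratp q" "poly q g \<noteq> 0" "t * poly q g = poly p g"
    unfolding Qset_def by blast
  have "ratp (p - smult (real j) q)"
      by (intro ratp_diff ratp_smult pq) auto
  moreover have "ratp (monom 1 i * q)"
      by (intro ratp_mult ratp_monom pq) auto
  moreover have "poly (monom 1 i * q) g \<noteq> 0" using pq assms by (simp add: poly_monom)
  moreover have "(t - real j) / g ^ i * poly (monom 1 i * q) g = poly (p - smult (real j) q) g"
  proof -
    have "(t - real j) / g^i * (g^i * poly q g) = (t - real j) * poly q g" using assms(2) by simp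
    then show ?thesis by (simp add: poly_monom algebra_simps flip: pq(4))
  qed
  ultimately show ?thesis unfolding Qset_def by blast
qed

lemma Q_tie: assumes tr: "transc g" and ik: "i \<noteq> k"
  and eq: "real a + g^i * m = real b + g^k * m"
  shows "m \<in> Qset g"
proof -
  define q where "q = monom (1::real) i - monom 1 k"
  have rq: "ratp q" unfolding q_def by (intro ratp_diff ratp_monom) auto
  have "coeff q i = 1" using ik by (simp add: q_def)
  then have "q \<noteq> 0" by auto
  then have qn: "poly q g \<noteq> 0" using tr rq unfolding transc_def by blast
  have "ratp [:real b - real a:]" by (intro ratp_const) auto
  moreover have "m * poly q g = poly [:real b - real a:] g"
      using eq by (simp add: q_def poly_monom algebra_simps)
  ultimately show ?thesis using rq qn unfolding Qset_def by blast
qed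

lemma QQ: assumes ai: "alg_indep2 a b" and ta: "t \<in> Qset a" and tb: "t \<in> Qset b"
  shows "t \<in> \<rat>"
proof -
  from ta obtain p q where pq: "ratp p" "ratp q" "poly q a \<noteq> 0" "t * poly q a = poly p a"
    unfolding Qset_def by blast
  from tb obtain r s where rs: "ratp r" "ratp s" "poly s b \<noteq> 0" "t * poly s b = poly r b"
    unfolding Qset_def by blast
  define N where "N = max (max (degree p) (degree q)) (max (degree r) (degree s))"
  define c where "c i j = coeff p i * coeff s j - coeff q i * coeff r j" for i j
  have cr: "\<forall>i j. c i j \<in> \<rat>" using pq rs by (auto simp: c_def ratp_def)
  have "(\<Sum>i\<le>N. \<Sum>j\<le>N. c i j * a^i * b^j) =
     (\<Sum>i\<le>N. \<Sum>j\<le>N. (coeff p i * a^i) * (coeff s j * b^j)) - (\<Sum>i\<le>N. \<Sum>j\<le>N. (coeff q i * a^i) * (coeff r j * b^j))"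
    by (simp add: c_def sum_subtractf algebra_simps)
  also have "\<dots> = (\<Sum>i\<le>N. coeff p i * a^i) * (\<Sum>j\<le>N. coeff s j * b^j) - (\<Sum>i\<le>N. coeff q i * a^i) * (\<Sum>j\<le>N. coeff r j * b^j)"
    by (simp add: sum_product)
  also have "\<dots> = poly p a * poly s b - poly q a * poly r b"
    using poly_sum_N[of p N a] poly_sum_N[of q N a] poly_sum_N[of r N b] poly_sum_N[of s N b]
    by (simp add: N_def)
  also have "\<dots> = 0" by (simp flip: pq(4) rs(4))
  finally have s0: "(\<Sum>i\<le>N. \<Sum>j\<le>N. c i j * a^i * b^j) = 0" .
  have "s \<noteq> 0" using rs by auto
  define j0 where "j0 = degree s"
  have sj0: "coeff s j0 \<noteq> 0" using \<open>s \<noteq> 0\<close> by (simp add: j0_def)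
  have j0N: "j0 \<le> N" by (simp add: j0_def N_def)
  define l where "l = coeff r j0 / coeff s j0"
  have lr: "l \<in> \<rat>" using rs by (auto simp: l_def ratp_def)
  have "p = smult l q"
  proof (rule poly_eqI)
    fix i show "coeff p i = coeff (smult l q) i"
    proof (cases "i \<le> N")
      case True
      then have "c i j0 = 0" using indep_rat[OF ai cr s0 _ j0N] by auto
      then show ?thesis using sj0 by (simp add: c_def l_def field_simps)
    next
      case False
      then show ?thesis by (simp add: N_def coeff_eq_0)
    qed
  qed
  then have "t * poly q a = l * poly q a" using pq(4) by simp
  then have "t = l" using pq(3) by simp
  then show ?thesis using lr by simp
qed


lemma supp_in_Q:
  fixes P :: "nat \<Rightarrow> complex poly" and F :: "real \<Rightarrow> complex"
  assumes g: "g > 0" and tr: "transc g"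
  and wo: "\<forall>S. S \<subseteq> {i. F i \<noteq> 0} \<longrightarrow> S \<noteq> {} \<longrightarrow> (\<exists>m\<in>S. \<forall>s\<in>S. m \<le> s)"
  and Pnz: "\<exists>i\<le>d. P i \<noteq> 0"
  and eq: "\<forall>e. (\<Sum>i\<le>d. \<Sum>j\<le>degree (P i). coeff (P i) j * F ((e - real j) / g^i)) = poly_hahn A e"
  and Ft: "F t \<noteq> 0"
  shows "t \<in> Qset g"
proof (rule ccontr)
  assume tQ: "t \<notin> Qset g"
  define T where "T = {t. F t \<noteq> 0 \<and> t \<notin> Qset g}"
  have "T \<subseteq> {i. F i \<noteq> 0}" "T \<noteq> {}" using Ft tQ by (auto simp: T_def)
  then obtain m where mT: "m \<in> T" and mmin: "\<forall>s\<in>T. m \<le> s" using wo by blast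
  define I where "I = {i. i \<le> d \<and> P i \<noteq> 0}"
  have If: "finite I" "I \<noteq> {}" using Pnz by (auto simp: I_def)
  define v where "v i = (LEAST j. coeff (P i) j \<noteq> 0)" for i
  have vP: "coeff (P i) (v i) \<noteq> 0" "v i \<le> degree (P i)" if "i \<in> I" for i
  proof -
    have "coeff (P i) (degree (P i)) \<noteq> 0" using that by (simp add: I_def)
    then show "coeff (P i) (v i) \<noteq> 0" "v i \<le> degree (P i)"
      unfolding v_def by (rule LeastI, rule Least_le)
  qed
  have vle: "v i \<le> j" if "coeff (P i) j \<noteq> 0" for i j
    unfolding v_def using that by (auto intro: Least_le)
  define h where "h i = real (v i) + g^i * m" for i
  define E where "E = Min (h ` I)"
  have "E \<in> h ` I" unfolding E_def using If by auto
  then obtain k where kI: "k \<in> I" and Ek: "E = h k" by auto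
  have Ele: "E \<le> h i" if "i \<in> I" for i unfolding E_def using If that by auto
  have mQ: "m \<notin> Qset g" "F m \<noteq> 0" using mT by (auto simp: T_def)
  have uniq: "i = k" if "i \<in> I" "h i = h k" for i
  proof (rule ccontr)
    assume "i \<noteq> k"
    then have "m \<in> Qset g" using Q_tie[OF tr, of i k "v i" m "v k"] that by (simp add: h_def)
    then show False using mQ by simp
  qed
  have EQ: "E \<notin> Qset g"
  proof
    assume "E \<in> Qset g"
    then have "(E - real (v k)) / g^k \<in> Qset g" by (rule Q_unshift[OF _ g])
    moreover have "(E - real (v k)) / g^k = m" using g by (simp add: Ek h_def)
    ultimately show False using mQ by simp
  qed
  have A0: "poly_hahn A E = 0"
    unfolding poly_hahn_def using EQ Q_nat by auto
  define c where "c = coeff (P k) (v k) * F m"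
  have termeq: "coeff (P i) j * F ((E - real j) / g^i) = (if i = k \<and> j = v k then c else 0)"
    if "i \<le> d" for i j
  proof (cases "i = k \<and> j = v k")
    case True
    have "(E - real (v k)) / g^k = m" using g by (simp add: Ek h_def)
    then show ?thesis using True by (simp add: c_def)
  next
    case False
    show ?thesis
    proof (rule ccontr)
      assume ne: "coeff (P i) j * F ((E - real j) / g^i) \<noteq> (if i = k \<and> j = v k then c else 0)"
      then have cj: "coeff (P i) j \<noteq> 0" and Ft': "F ((E - real j) / g^i) \<noteq> 0" using False by auto
      define t' where "t' = (E - real j) / g^i"
      have iI: "i \<in> I" using cj that by (auto simp: I_def)
      have Et: "E = real j + g^i * t'" using g by (simp add: t'_def)
      have "t' \<notin> Qset g"
      proof
        assume "t' \<in> Qset g"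
        then have "real j + g^i * t' \<in> Qset g" by (rule Q_shift)
        then show False using EQ Et by simp
      qed
      then have "t' \<in> T" using Ft' by (simp add: T_def t'_def)
      then have mt: "m \<le> t'" using mmin by auto
      have vj: "v i \<le> j" using vle cj .
      have gi: "g^i > 0" using g by simp
      have "g^i * m \<le> g^i * t'" using mt gi by simp
      then have hle: "h i \<le> E" using vj Et by (simp add: h_def)
      then have "h i = h k" using Ele[OF iI] Ek by simp
      then have ik: "i = k" using uniq iI by simp
      have "real (v i) + g^i * m = real j + g^i * t'" using hle Ele[OF iI] Et by (simp add: h_def)
      then have "j = v k \<and> t' = m" using vj \<open>g^i * m \<le> g^i * t'\<close> gi ik
        by (smt (verit) mult_left_le_imp_le of_nat_le_iff of_nat_eq_iff mt)
      then show False using False ik by simp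
    qed
  qed
  have "(\<Sum>i\<le>d. \<Sum>j\<le>degree (P i). coeff (P i) j * F ((E - real j) / g^i))
      = (\<Sum>i\<le>d. \<Sum>j\<le>degree (P i). (if i = k \<and> j = v k then c else 0))"
    by (intro sum.cong refl) (simp add: termeq)
  also have "\<dots> = (\<Sum>i\<le>d. if i = k then c else 0)"
  proof (intro sum.cong refl)
    fix i assume "i \<in> {..d}"
    show "(\<Sum>j\<le>degree (P i). (if i = k \<and> j = v k then c else 0)) = (if i = k then c else 0)"
      using vP(2)[OF kI] by (cases "i = k") auto
  qed
  also have "\<dots> = c" using kI by (simp add: I_def)
  finally have "c = 0" using eq A0 by simp
  then show False using vP(1)[OF kI] mQ by (simp add: c_def)
qed


lemma final_step:
  fixes P :: "nat \<Rightarrow> complex poly" and F :: "real \<Rightarrow> complex"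
  assumes g: "g > 0" and tr: "transc g"
  and rat: "\<forall>t. F t \<noteq> 0 \<longrightarrow> t \<in> \<rat>"
  and Pnz: "\<exists>i\<le>d. P i \<noteq> 0"
  and PK: "\<forall>i\<le>d. P i \<in> Kpoly K" and AK: "A \<in> Kpoly K"
  and K01: "0 \<in> K" "1 \<in> K" and F0: "F 0 \<in> K"
  and eq: "\<forall>e. (\<Sum>i\<le>d. \<Sum>j\<le>degree (P i). coeff (P i) j * F ((e - real j) / g^i)) = poly_hahn A e"
  shows "rational_hahn K F"
proof (cases "\<exists>s. s \<noteq> 0 \<and> F s \<noteq> 0")
  case True
  then obtain s where s: "s \<noteq> 0" "F s \<noteq> 0" by auto
  have sQ: "s \<in> \<rat>" using rat s by auto
  have Pi0: "P i = 0" if i1: "1 \<le> i" and id: "i \<le> d" for i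
  proof (rule poly_eqI)
    fix n show "coeff (P i) n = coeff 0 n"
    proof (cases "n \<le> degree (P i)")
      case False then show ?thesis by (simp add: coeff_eq_0)
    next
      case nd: True
      define e where "e = real n + g^i * s"
      have gi: "\<And>i. g^i > 0" using g by simp
      have termeq: "coeff (P i') j * F ((e - real j) / g^i') = (if i' = i \<and> j = n then coeff (P i) n * F s else 0)"
        for i' j
      proof (cases "i' = i \<and> j = n")
        case True
        have "(e - real n) / g^i = s" using gi[of i] g by (simp add: e_def)
        then show ?thesis using True by simp
      next
        case False
        show ?thesis
        proof (rule ccontr)
          assume "coeff (P i') j * F ((e - real j) / g^i') \<noteq> (if i' = i \<and> j = n then coeff (P i) n * F s else 0)"
          then have Fr: "F ((e - real j) / g^i') \<noteq> 0" using False by auto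
          define r where "r = (e - real j) / g^i'"
          have rQ: "r \<in> \<rat>" using rat Fr by (simp add: r_def)
          define Z where "Z = [:real n - real j:] + monom s i - monom r i'"
          have rZ: "ratp Z" unfolding Z_def
            by (intro ratp_add ratp_diff ratp_const ratp_monom sQ rQ) auto
          have "e - real j = r * g^i'" using gi[of i'] g by (simp add: r_def)
          then have "poly Z g = 0" by (simp add: Z_def poly_monom e_def algebra_simps)
          then have Z0: "Z = 0" using tr rZ unfolding transc_def by blast
          show False
          proof (cases "i' = i")
            case True
            have "coeff Z 0 = 0" using Z0 by simp
            then have "real n - real j = 0" using True i1 by (simp add: Z_def)
            then show False using False True by simp
          next
            case ne: False
            have "coeff Z i = 0" using Z0 by simp
            then have "s = 0" using ne i1 by (simp add: Z_def coeff_pCons split: nat.splits)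
            then show False using s by simp
          qed
        qed
      qed
      have A0: "poly_hahn A e = 0"
      proof -
        have "\<not> (\<exists>n'. e = real n')"
        proof
          assume "\<exists>n'. e = real n'"
          then obtain n' where n': "e = real n'" by auto
          define Z where "Z = [:real n - real n':] + monom s i"
          have rZ: "ratp Z" unfolding Z_def
            by (intro ratp_add ratp_const ratp_monom sQ) auto
          have "poly Z g = 0" using n' by (simp add: Z_def poly_monom e_def algebra_simps)
          then have "Z = 0" using tr rZ unfolding transc_def by blast
          then have "coeff Z i = 0" by simp
          then have "s = 0" using i1 by (simp add: Z_def coeff_pCons split: nat.splits)
          then show False using s by simp
        qed
        then show ?thesis unfolding poly_hahn_def by simp
      qed
      have "(\<Sum>i'\<le>d. \<Sum>j\<le>degree (P i'). coeff (P i') j * F ((e - real j) / g^i'))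
          = (\<Sum>i'\<le>d. \<Sum>j\<le>degree (P i'). (if i' = i \<and> j = n then coeff (P i) n * F s else 0))"
        by (intro sum.cong refl) (simp add: termeq)
      also have "\<dots> = (\<Sum>i'\<le>d. if i' = i then coeff (P i) n * F s else 0)"
      proof (intro sum.cong refl)
        fix i' assume "i' \<in> {..d}"
        show "(\<Sum>j\<le>degree (P i'). (if i' = i \<and> j = n then coeff (P i) n * F s else 0)) = (if i' = i then coeff (P i) n * F s else 0)"
          using nd by (cases "i' = i") auto
      qed
      also have "\<dots> = coeff (P i) n * F s" using id by simp
      finally have "coeff (P i) n * F s = 0" using eq A0 by simp
      then show ?thesis using s by simp
    qed
  qed
  have P0: "P 0 \<noteq> 0" using Pnz Pi0 by (metis less_one not_less)
  have "pmul_hahn (P 0) F = poly_hahn A"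
  proof
    fix e
    have "(\<Sum>i\<le>d. \<Sum>j\<le>degree (P i). coeff (P i) j * F ((e - real j) / g^i))
        = (\<Sum>i\<le>d. if i = 0 then (\<Sum>j\<le>degree (P 0). coeff (P 0) j * F (e - real j)) else 0)"
    proof (intro sum.cong refl)
      fix i assume "i \<in> {..d}"
      then show "(\<Sum>j\<le>degree (P i). coeff (P i) j * F ((e - real j) / g^i))
        = (if i = 0 then (\<Sum>j\<le>degree (P 0). coeff (P 0) j * F (e - real j)) else 0)"
        using Pi0[of i] by (cases "i = 0") auto
    qed
    also have "\<dots> = pmul_hahn (P 0) F e" by (simp add: pmul_hahn_def)
    finally show "pmul_hahn (P 0) F e = poly_hahn A e" using eq by simp
  qed
  moreover have "P 0 \<in> Kpoly K" using PK by simp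
  ultimately show ?thesis unfolding rational_hahn_def using P0 AK by blast
next
  case False
  have "pmul_hahn 1 F = poly_hahn [:F 0:]"
  proof
    fix e
    show "pmul_hahn 1 F e = poly_hahn [:F 0:] e"
    proof (cases "e = 0")
      case True then show ?thesis by (simp add: pmul_hahn_def poly_hahn_def)
    next
      case ne: False
      then have "F e = 0" using False by auto
      moreover have "poly_hahn [:F 0:] e = 0"
        unfolding poly_hahn_def using ne by (auto simp: coeff_pCons split: nat.splits)
      ultimately show ?thesis by (simp add: pmul_hahn_def)
    qed
  qed
  moreover have "[:F 0:] \<in> Kpoly K" using F0 K01 by (auto simp: Kpoly_def coeff_pCons split: nat.splits)
  moreover have "(1::complex poly) \<in> Kpoly K" using K01 by (auto simp: Kpoly_def coeff_1)
  ultimately show ?thesis unfolding rational_hahn_def by (intro exI[of _ "[:F 0:]"] exI[of _ 1]) auto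
qed

lemma mahler_eq:
  assumes "mahler K g F"
  shows "\<exists>d P A. (\<forall>i\<le>d. P i \<in> Kpoly K) \<and> A \<in> Kpoly K \<and> (\<exists>i\<le>d. P i \<noteq> 0) \<and>
     (\<forall>e. (\<Sum>i\<le>d. \<Sum>j\<le>degree (P i). coeff (P i) j * F ((e - real j) / g^i)) = poly_hahn A e)"
proof -
  from assms obtain d P A where h: "\<forall>i\<le>d. P i \<in> Kpoly K" "A \<in> Kpoly K" "\<exists>i\<le>d. P i \<noteq> 0"
    "(\<lambda>e. \<Sum>i\<le>d. pmul_hahn (P i) (subst_hahn (g ^ i) F) e) = poly_hahn A"
    unfolding mahler_def by blast
  have "\<forall>e. (\<Sum>i\<le>d. \<Sum>j\<le>degree (P i). coeff (P i) j * F ((e - real j) / g^i)) = poly_hahn A e"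
  proof
    fix e show "(\<Sum>i\<le>d. \<Sum>j\<le>degree (P i). coeff (P i) j * F ((e - real j) / g^i)) = poly_hahn A e"
      using fun_cong[OF h(4), of e] by (simp add: pmul_hahn_def subst_hahn_def)
  qed
  then show ?thesis using h by blast
qed

theorem mainTheorem2:
  fixes K :: "complex set" and \<alpha> \<beta> :: real and F :: "real \<Rightarrow> complex"
  assumes "number_field K"
    and "\<alpha> > 0" and "\<beta> > 0" and "alg_indep2 \<alpha> \<beta>"
    and "hahn_series K F"
    and "mahler K \<alpha> F" and "mahler K \<beta> F"
  shows "rational_hahn K F"
proof -
  have K01: "0 \<in> K" "1 \<in> K" using assms(1) by (auto simp: number_field_def)
  have FK: "F 0 \<in> K"
    and wo: "\<forall>S. S \<subseteq> {i. F i \<noteq> 0} \<longrightarrow> S \<noteq> {} \<longrightarrow> (\<exists>m\<in>S. \<forall>s\<in>S. m \<le> s)"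
    using assms(5) by (auto simp: hahn_series_def)
  have ta: "transc \<alpha>" using transc_a[OF assms(4)] .
  have tb: "transc \<beta>" using transc_b[OF assms(4)] .
  obtain d P A where a: "\<forall>i\<le>d. P i \<in> Kpoly K" "A \<in> Kpoly K" "\<exists>i\<le>d. P i \<noteq> 0"
     "\<forall>e. (\<Sum>i\<le>d. \<Sum>j\<le>degree (P i). coeff (P i) j * F ((e - real j) / \<alpha>^i)) = poly_hahn A e"
    using mahler_eq[OF assms(6)] by blast
  obtain d' P' A' where b: "\<forall>i\<le>d'. P' i \<in> Kpoly K" "A' \<in> Kpoly K" "\<exists>i\<le>d'. P' i \<noteq> 0"
     "\<forall>e. (\<Sum>i\<le>d'. \<Sum>j\<le>degree (P' i). coeff (P' i) j * F ((e - real j) / \<beta>^i)) = poly_hahn A' e"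
    using mahler_eq[OF assms(7)] by blast
  have rat: "\<forall>t. F t \<noteq> 0 \<longrightarrow> t \<in> \<rat>"
  proof (intro allI impI)
    fix t assume Ft: "F t \<noteq> 0"
    have "t \<in> Qset \<alpha>" by (rule supp_in_Q[OF assms(2) ta wo a(3) a(4) Ft])
    moreover have "t \<in> Qset \<beta>" by (rule supp_in_Q[OF assms(3) tb wo b(3) b(4) Ft])
    ultimately show "t \<in> \<rat>" using QQ[OF assms(4)] by blast
  qed
  show ?thesis by (rule final_step[OF assms(2) ta rat a(3) a(1) a(2) K01 FK a(4)])
qed

end
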